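(* For $p\in\mathbb{R}\setminus\{0\}$ let $A_p:\mathcal{P}^1_2\to\mathbb{R}^2$ be $A_p(\rho)=p\rho^{1/p}$ (componentwise), and let $A_\infty(\rho)=\log\rho$ (componentwise). For $p\in(1,+\infty]$ let $c_p(\rho)$ denote the curvature of the plane curve $A_p(\mathcal{P}^1_2)\subset\mathbb{R}^2$ at the point $A_p(\rho)$, i.e. for a regular parametrization $t\mapsto(x(t),y(t))$ of the curve, $c_p=\frac{|x'y''-x''y'|}{((x')^2+(y')^2)^{3/2}}$. Then: (i) if $p\in(1,2)$, the function $c_p:\mathcal{P}^1_2\to\mathbb{R}$ is strictly Schur-decreasing; (ii) if $p\in(2,+\infty]$, the function $c_p:\mathcal{P}^1_2\to\mathbb{R}$ is strictly Schur-increasing.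
   Context: $\mathcal{P}^1_2=\{\rho\in\mathbb{R}^2:\rho_1+\rho_2=1,\ \rho_i>0\}$. For $x\in\mathbb{R}^n$, $x^{\downarrow}$ is $x$ with components in decreasing order; $x\succ y$ means $\sum_{i=1}^k x^{\downarrow}_i\le\sum_{i=1}^k y^{\downarrow}_i$ for $k<n$ with equality for $k=n$. A function $f$ is strictly Schur-increasing if $x\succ y$ implies $f(x)\ge f(y)$, with strict inequality whenever $x$ is not a permutation of $y$; strictly Schur-decreasing if $x\succ y$ implies $f(x)\le f(y)$, with strict inequality whenever $x$ is not a permutation of $y$. (The curve $A_p(\mathcal{P}^1_2)$ is the pull-back picture of the $\alpha$-geometry with $p=\frac{2}{1-\alpha}$.) *)

theory Defs
  imports "HOL-Analysis.Analysis"
begin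

definition P12 :: "(real \<times> real) set" where
  "P12 = {\<rho>. fst \<rho> + snd \<rho> = 1 \<and> fst \<rho> > 0 \<and> snd \<rho> > 0}"

text \<open>Componentwise map: for finite nonzero p, r \<mapsto> p r^(1/p); for p = +\<infinity>, r \<mapsto> log r.
  The value at -\<infinity> is irrelevant (never used).\<close>
definition Acomp :: "ereal \<Rightarrow> real \<Rightarrow> real" where
  "Acomp p r = (case p of ereal q \<Rightarrow> q * r powr (1 / q) | PInfty \<Rightarrow> ln r | MInfty \<Rightarrow> 0)"

definition A :: "ereal \<Rightarrow> real \<times> real \<Rightarrow> real \<times> real" where
  "A p \<rho> = (Acomp p (fst \<rho>), Acomp p (snd \<rho>))"

definition curvature :: "(real \<Rightarrow> real \<times> real) \<Rightarrow> real \<Rightarrow> real" where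
  "curvature \<gamma> t =
     (let x1 = deriv (\<lambda>s. fst (\<gamma> s)) t; y1 = deriv (\<lambda>s. snd (\<gamma> s)) t;
          x2 = deriv (deriv (\<lambda>s. fst (\<gamma> s))) t; y2 = deriv (deriv (\<lambda>s. snd (\<gamma> s))) t
      in \<bar>x1 * y2 - x2 * y1\<bar> / (x1\<^sup>2 + y1\<^sup>2) powr (3/2))"

definition curv :: "ereal \<Rightarrow> real \<times> real \<Rightarrow> real" where
  "curv p \<rho> = curvature (\<lambda>t. A p (t, 1 - t)) (fst \<rho>)"

text \<open>Majorization on R^2 in the paper's convention: x \<succ> y iff x\<down>_1 \<le> y\<down>_1 and equal sums.\<close>
definition majorizes :: "real \<times> real \<Rightarrow> real \<times> real \<Rightarrow> bool" where
  "majorizes x y \<longleftrightarrow> max (fst x) (snd x) \<le> max (fst y) (snd y) \<and> fst x + snd x = fst y + snd y"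

definition is_perm2 :: "real \<times> real \<Rightarrow> real \<times> real \<Rightarrow> bool" where
  "is_perm2 x y \<longleftrightarrow> x = y \<or> x = prod.swap y"

definition strictly_schur_increasing_on :: "(real \<times> real) set \<Rightarrow> (real \<times> real \<Rightarrow> real) \<Rightarrow> bool" where
  "strictly_schur_increasing_on S f \<longleftrightarrow>
     (\<forall>x\<in>S. \<forall>y\<in>S. majorizes x y \<longrightarrow> f x \<ge> f y \<and> (\<not> is_perm2 x y \<longrightarrow> f x > f y))"

definition strictly_schur_decreasing_on :: "(real \<times> real) set \<Rightarrow> (real \<times> real \<Rightarrow> real) \<Rightarrow> bool" where
  "strictly_schur_decreasing_on S f \<longleftrightarrow>
     (\<forall>x\<in>S. \<forall>y\<in>S. majorizes x y \<longrightarrow> f x \<le> f y \<and> (\<not> is_perm2 x y \<longrightarrow> f x < f y))"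

end

theory Submission
  imports Defs
begin

definition L :: "real \<Rightarrow> real \<Rightarrow> real" where
  "L q t = (q-2) * (ln t + ln (1-t)) - 3/2  *  ln (t powr (2 * q-2) + (1-t) powr (2 * q-2))"

lemma dpow1: "t < 1 \<Longrightarrow> ((\<lambda>s. (1-s) powr a) has_real_derivative - (a  *  (1-t) powr (a-1))) (at t)"
proof -
  assume t: "t < 1"
  have g: "((\<lambda>s. 1-s) has_real_derivative -1) (at t)" by (auto intro!: derivative_eq_intros)
  have "((\<lambda>z. z powr a) has_real_derivative a  *  (1 - t) powr (a - 1)) (at (1 - t))"
    using t by (intro has_real_derivative_powr) simp
  from DERIV_chain2[OF this g] show ?thesis by simp
qed

lemma dL:
  assumes "0<t" "t<1"
  shows "(L q has_real_derivative
     (q-2) * (1/t - 1/(1-t)) - 3/2  *  ((2 * q-2)  *  t powr (2 * q-3) - (2 * q-2)  *  (1-t) powr (2 * q-3))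
        / (t powr (2 * q-2) + (1-t) powr (2 * q-2))) (at t)"
proof -
  have "2 * q-2-1 = 2 * q-3" by simp
  have d1: "((\<lambda>s. s powr (2 * q-2)) has_real_derivative (2 * q-2)  *  t powr (2 * q-3)) (at t)"
    using has_real_derivative_powr[OF assms(1), of "2 * q-2"] by simp
  have d2: "((\<lambda>s. (1-s) powr (2 * q-2)) has_real_derivative - ((2 * q-2)  *  (1-t) powr (2 * q-3))) (at t)"
    using dpow1[OF assms(2), of "2 * q-2"] by simp
  have pos: "0 < t powr (2 * q-2) + (1-t) powr (2 * q-2)" using assms by (simp add: add_pos_pos)
  have d3: "((\<lambda>s. ln (s powr (2 * q-2) + (1-s) powr (2 * q-2))) has_real_derivative
      ((2 * q-2)  *  t powr (2 * q-3) - (2 * q-2)  *  (1-t) powr (2 * q-3)) / (t powr (2 * q-2) + (1-t) powr (2 * q-2))) (at t)"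
    using DERIV_ln_divide[OF pos] DERIV_add[OF d1 d2]
    by (auto dest: DERIV_chain2[where f=ln] simp: divide_simps)
  have d4: "((\<lambda>s. ln s + ln (1-s)) has_real_derivative 1/t - 1/(1-t)) (at t)"
    using assms by (auto intro!: derivative_eq_intros simp: divide_simps)
  show ?thesis unfolding L_def
    using DERIV_diff[OF DERIV_cmult[OF d4, of "q-2"] DERIV_cmult[OF d3, of "3/2"]] by simp
qed

definition E :: "real \<Rightarrow> real \<Rightarrow> real" where
  "E q t = (q-2) * (1/t - 1/(1-t)) - 3/2  *  ((2 * q-2)  *  t powr (2 * q-3) - (2 * q-2)  *  (1-t) powr (2 * q-3))
        / (t powr (2 * q-2) + (1-t) powr (2 * q-2))"

lemma alg: "u \<noteq> 0 \<Longrightarrow> v \<noteq> 0 \<Longrightarrow> (D::real) \<noteq> 0 \<Longrightarrow>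
  ((q-2) * (1/u - 1/v) - 3/2 * c / D) * (u * v * D) = (q-2) * (v - u) * D - 3/2 * c * (u * v)"
  by (simp add: field_simps)

lemma E_key:
  assumes "1/2 < t" "t < 1" "q < 1"
  shows "(q < 1/2 \<longrightarrow> E q t < 0) \<and> (1/2 < q \<longrightarrow> 0 < E q t)"
proof -
  define u where "u = t"
  define v where "v = 1 - t"
  have u: "0 < u" and v: "0 < v" and uv: "v < u" using assms by (auto simp: u_def v_def)
  define A where "A = u powr (2 * q-3)"
  define B where "B = v powr (2 * q-3)"
  have A: "0 < A" and B: "0 < B" using u v by (auto simp: A_def B_def)
  have AB: "A < B" unfolding A_def B_def using assms u v uv by (intro powr_less_mono2_neg) auto
  have ur: "u powr (2 * q-2) = A  *  u" unfolding A_def using u powr_add[of u "2 * q-3" 1] by simp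
  have vr: "v powr (2 * q-2) = B  *  v" unfolding B_def using v powr_add[of v "2 * q-3" 1] by simp
  have ur1: "u powr (2 * q-1) = A  *  u  *  u" unfolding A_def using u powr_add[of u "2 * q-3" 2] by (simp add: power2_eq_square)
  have vr1: "v powr (2 * q-1) = B  *  v  *  v" unfolding B_def using v powr_add[of v "2 * q-3" 2] by (simp add: power2_eq_square)
  have Eeq: "E q t  *  (u * v * (A * u+B * v)) = (1-2 * q) * u * v * (A-B) + (q-2) * (B * v * v - A * u * u)"
  proof -
    have e: "E q t = (q-2) * (1/u - 1/v) - 3/2  *  ((2 * q-2)  *  A - (2 * q-2)  *  B) / (A * u+B * v)"
      unfolding E_def using ur vr by (simp add: A_def B_def u_def v_def)
    moreover have "A * u+B * v > 0" using A B u v by (simp add: add_pos_pos)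
    have m: "((q-2) * (1/u - 1/v) - 3/2 * ((2 * q-2) * A - (2 * q-2) * B) / (A * u+B * v)) * (u * v * (A * u+B * v))
       = (q-2) * (v - u) * (A * u+B * v) - 3/2 * ((2 * q-2) * A - (2 * q-2) * B) * (u * v)"
      using alg[of u v "A * u+B * v" q "(2 * q-2) * A - (2 * q-2) * B"] u v \<open>A * u+B * v > 0\<close> by simp
    have p: "(q-2) * (v - u) * (A * u+B * v) - 3/2 * ((2 * q-2) * A - (2 * q-2) * B) * (u * v)
       = (1-2 * q) * u * v * (A-B) + (q-2) * (B * v * v - A * u * u)" by (simp add: algebra_simps)
    show ?thesis unfolding e m p ..
  qed
  have D: "0 < u * v * (A * u+B * v)" using A B u v by (simp add: add_pos_pos)
  have t1: "u * v * (A-B) < 0" using u v AB by (simp add: mult_pos_neg)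
  show ?thesis
  proof safe
    assume q: "q < 1/2"
    have "u powr (2 * q-1) < v powr (2 * q-1)" using q u v uv by (intro powr_less_mono2_neg) auto
    hence "A * u * u < B * v * v" using ur1 vr1 by simp
    hence "(q-2) * (B * v * v - A * u * u) < 0" using q mult_neg_pos[of "q-2" "B * v * v - A * u * u"] by simp
    moreover have "(1-2 * q) * (u * v * (A-B)) < 0" using q t1 mult_pos_neg[of "1-2 * q" "u * v * (A-B)"] by simp
    ultimately have "(1-2 * q) * u * v * (A-B) + (q-2) * (B * v * v - A * u * u) < 0"
      by (simp add: mult.assoc)
    with Eeq D show "E q t < 0" by (metis mult_less_0_iff not_less_iff_gr_or_eq less_asym)
  next
    assume q: "1/2 < q"
    have "v powr (2 * q-1) < u powr (2 * q-1)" using q u v uv by (intro powr_less_mono2) auto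
    hence "B * v * v < A * u * u" using ur1 vr1 by simp
    hence "(q-2) * (B * v * v - A * u * u) > 0" using assms mult_neg_neg[of "q-2" "B * v * v - A * u * u"] by simp
    moreover have "(1-2 * q) * (u * v * (A-B)) > 0" using q t1 mult_neg_neg[of "1-2 * q" "u * v * (A-B)"] by simp
    ultimately have "(1-2 * q) * u * v * (A-B) + (q-2) * (B * v * v - A * u * u) > 0"
      by (simp add: mult.assoc)
    with Eeq D show "0 < E q t" by (metis zero_less_mult_pos2)
  qed
qed

lemma L_mono:
  assumes "1/2 \<le> a" "a < b" "b < 1" "q < 1"
  shows "(q < 1/2 \<longrightarrow> L q b < L q a) \<and> (1/2 < q \<longrightarrow> L q a < L q b)"
proof -
  have cont: "continuous_on {a..b} (L q)"
    using assms by (intro continuous_at_imp_continuous_on ballI DERIV_isCont[OF dL]) auto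
  have der: "\<And>x. a < x \<Longrightarrow> x < b \<Longrightarrow> (L q has_real_derivative E q x) (at x)"
    using assms unfolding E_def by (intro dL) auto
  show ?thesis
  proof safe
    assume "q < 1/2"
    then show "L q b < L q a"
    proof (intro DERIV_neg_imp_decreasing_open[OF \<open>a<b\<close> _ cont])
      fix x assume x: "a < x" "x < b"
      have "E q x < 0" using E_key[of x q] x assms \<open>q < 1/2\<close> by auto
      with der[OF x] show "\<exists>y. (L q has_real_derivative y) (at x) \<and> y < 0" by blast
    qed
  next
    assume "1/2 < q"
    then show "L q a < L q b"
    proof (intro DERIV_pos_imp_increasing_open[OF \<open>a<b\<close> _ cont])
      fix x assume x: "a < x" "x < b"
      have "E q x > 0" using E_key[of x q] x assms \<open>1/2 < q\<close> by auto
      with der[OF x] show "\<exists>y. (L q has_real_derivative y) (at x) \<and> y > 0" by blast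
    qed
  qed
qed

lemma L_sym: "L q (1 - t) = L q t"
  unfolding L_def by (simp add: algebra_simps)

lemma curv_formula:
  fixes X Y :: "real \<Rightarrow> real"
  assumes dX: "\<And>s. 0<s \<Longrightarrow> s<1 \<Longrightarrow> (X has_real_derivative s powr (q-1)) (at s)"
    and dY: "\<And>s. 0<s \<Longrightarrow> s<1 \<Longrightarrow> (Y has_real_derivative -((1-s) powr (q-1))) (at s)"
    and q: "q < 1" and t: "0 < t" "t < 1"
  shows "curvature (\<lambda>s. (X s, Y s)) t = (1-q) * exp (L q t)"
proof -
  have ev: "eventually (\<lambda>s. s \<in> {0<..<1}) (nhds t)"
    by (intro eventually_nhds_in_open) (auto simp: t)
  have dx: "deriv X t = t powr (q-1)" using dX t by (intro DERIV_imp_deriv) auto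
  have dy: "deriv Y t = -((1-t) powr (q-1))" using dY t by (intro DERIV_imp_deriv) auto
  have ddx: "deriv (deriv X) t = (q-1) * t powr (q-2)"
  proof -
    have "deriv (deriv X) t = deriv (\<lambda>s. s powr (q-1)) t"
      by (rule deriv_cong_ev[OF eventually_mono[OF ev]]) (auto intro: DERIV_imp_deriv dX)
    also have "\<dots> = (q-1) * t powr (q-2)"
      using DERIV_imp_deriv[OF has_real_derivative_powr[OF t(1), of "q-1"]] by simp
    finally show ?thesis .
  qed
  have ddy: "deriv (deriv Y) t = (q-1) * (1-t) powr (q-2)"
  proof -
    have "deriv (deriv Y) t = deriv (\<lambda>s. -((1-s) powr (q-1))) t"
      by (rule deriv_cong_ev[OF eventually_mono[OF ev]]) (auto intro: DERIV_imp_deriv dY)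
    also have "\<dots> = (q-1) * (1-t) powr (q-2)"
      using DERIV_imp_deriv[OF DERIV_minus[OF dpow1[OF t(2), of "q-1"]]] by simp
    finally show ?thesis .
  qed
  define T where "T = t powr (q-2)"
  define S where "S = (1-t) powr (q-2)"
  define D where "D = t powr (2*q-2) + (1-t) powr (2*q-2)"
  have T: "T > 0" and S: "S > 0" using t by (auto simp: T_def S_def)
  have t1: "t powr (q-1) = T * t" unfolding T_def using t powr_add[of t "q-2" 1] by simp
  have s1: "(1-t) powr (q-1) = S * (1-t)" unfolding S_def using t powr_add[of "1-t" "q-2" 1] by simp
  have t2: "(t powr (q-1))^2 = t powr (2*q-2)"
    using powr_add[of t "q-1" "q-1"] by (simp add: power2_eq_square algebra_simps)
  have s2: "((1-t) powr (q-1))^2 = (1-t) powr (2*q-2)"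
    using powr_add[of "1-t" "q-1" "q-1"] by (simp add: power2_eq_square algebra_simps)
  have num: "\<bar>t powr (q-1) * ((q-1) * (1-t) powr (q-2)) - (q-1) * t powr (q-2) * (-((1-t) powr (q-1)))\<bar>
      = (1-q) * T * S"
  proof -
    have "t powr (q-1) * ((q-1) * (1-t) powr (q-2)) - (q-1) * t powr (q-2) * (-((1-t) powr (q-1)))
        = (q-1) * T * S * (t + (1-t))" unfolding t1 s1 by (simp add: T_def S_def algebra_simps)
    also have "\<dots> = (q-1) * T * S" by simp
    finally show ?thesis using T S q by (simp add: abs_mult)
  qed
  have Dp: "D > 0" using t by (simp add: D_def add_pos_pos)
  have eL: "exp (L q t) = T * S / D powr (3/2)"
  proof -
    have "exp (L q t) = exp ((q-2) * ln t) * exp ((q-2) * ln (1-t)) / exp (3/2 * ln D)"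
      unfolding L_def D_def by (simp add: exp_diff exp_add distrib_left)
    also have "\<dots> = T * S / D powr (3/2)"
      using t Dp by (simp add: T_def S_def powr_def)
    finally show ?thesis .
  qed
  have c: "curvature (\<lambda>s. (X s, Y s)) t = \<bar>deriv X t * deriv (deriv Y) t - deriv (deriv X) t * deriv Y t\<bar>
       / ((deriv X t)\<^sup>2 + (deriv Y t)\<^sup>2) powr (3/2)"
    by (simp add: curvature_def Let_def)
  show ?thesis
    unfolding c dx dy ddx ddy num t2 eL by (simp add: s2 D_def)
qed

lemma P12_max:
  assumes "\<rho> \<in> P12"
  shows "L q (fst \<rho>) = L q (max (fst \<rho>) (snd \<rho>))" "1/2 \<le> max (fst \<rho>) (snd \<rho>)"
    "max (fst \<rho>) (snd \<rho>) < 1"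
proof -
  have s: "snd \<rho> = 1 - fst \<rho>" "0 < fst \<rho>" "fst \<rho> < 1" using assms by (auto simp: P12_def)
  show "L q (fst \<rho>) = L q (max (fst \<rho>) (snd \<rho>))"
    using L_sym[of q "fst \<rho>"] s by (auto simp: max_def)
  show "1/2 \<le> max (fst \<rho>) (snd \<rho>)" "max (fst \<rho>) (snd \<rho>) < 1" using s by (auto simp: max_def)
qed

lemma P12_perm:
  assumes "x \<in> P12" "y \<in> P12" "max (fst x) (snd x) = max (fst y) (snd y)"
  shows "is_perm2 x y"
proof -
  obtain a b where x: "x = (a, 1-a)" and y: "y = (b, 1-b)" using assms
    by (cases x; cases y) (auto simp: P12_def)
  have "a = b \<or> a = 1 - b" using assms(3) unfolding x y by (auto simp: max_def split: if_splits)
  then show ?thesis unfolding is_perm2_def x y by auto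
qed

lemma schur_inc:
  assumes f: "\<And>\<rho>. \<rho> \<in> P12 \<Longrightarrow> f \<rho> = (1-q) * exp (L q (fst \<rho>))" and q: "q < 1/2"
  shows "strictly_schur_increasing_on P12 f"
  unfolding strictly_schur_increasing_on_def
proof (intro ballI impI conjI)
  fix x y assume x: "x \<in> P12" and y: "y \<in> P12" and m: "majorizes x y"
  define mx where "mx = max (fst x) (snd x)"
  define my where "my = max (fst y) (snd y)"
  have fx: "f x = (1-q) * exp (L q mx)" using f[OF x] P12_max[OF x] by (simp add: mx_def)
  have fy: "f y = (1-q) * exp (L q my)" using f[OF y] P12_max[OF y] by (simp add: my_def)
  have le: "mx \<le> my" using m by (simp add: majorizes_def mx_def my_def)
  have b: "1/2 \<le> mx" "my < 1" using P12_max[OF x] P12_max[OF y] by (auto simp: mx_def my_def)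
  have q1: "0 < 1 - q" using q by simp
  show "f y \<le> f x"
  proof (cases "mx = my")
    case True then show ?thesis using fx fy by simp
  next
    case False
    then have "L q my < L q mx" using L_mono[of mx my q] le b q by auto
    then show ?thesis unfolding fx fy using q1 by simp
  qed
  assume np: "\<not> is_perm2 x y"
  then have "mx \<noteq> my" using P12_perm[OF x y] by (auto simp: mx_def my_def)
  then have "L q my < L q mx" using L_mono[of mx my q] le b q by auto
  then show "f y < f x" unfolding fx fy using q1 by simp
qed

lemma schur_dec:
  assumes f: "\<And>\<rho>. \<rho> \<in> P12 \<Longrightarrow> f \<rho> = (1-q) * exp (L q (fst \<rho>))" and q: "1/2 < q" "q < 1"
  shows "strictly_schur_decreasing_on P12 f"
  unfolding strictly_schur_decreasing_on_def
proof (intro ballI impI conjI)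
  fix x y assume x: "x \<in> P12" and y: "y \<in> P12" and m: "majorizes x y"
  define mx where "mx = max (fst x) (snd x)"
  define my where "my = max (fst y) (snd y)"
  have fx: "f x = (1-q) * exp (L q mx)" using f[OF x] P12_max[OF x] by (simp add: mx_def)
  have fy: "f y = (1-q) * exp (L q my)" using f[OF y] P12_max[OF y] by (simp add: my_def)
  have le: "mx \<le> my" using m by (simp add: majorizes_def mx_def my_def)
  have b: "1/2 \<le> mx" "my < 1" using P12_max[OF x] P12_max[OF y] by (auto simp: mx_def my_def)
  have q1: "0 < 1 - q" using q by simp
  show "f x \<le> f y"
  proof (cases "mx = my")
    case True then show ?thesis using fx fy by simp
  next
    case False
    then have "L q mx < L q my" using L_mono[of mx my q] le b q by auto
    then show ?thesis unfolding fx fy using q1 by simp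
  qed
  assume np: "\<not> is_perm2 x y"
  then have "mx \<noteq> my" using P12_perm[OF x y] by (auto simp: mx_def my_def)
  then have "L q mx < L q my" using L_mono[of mx my q] le b q by auto
  then show "f x < f y" unfolding fx fy using q1 by simp
qed

lemma curv_fin:
  assumes p: "1 < p" and r: "\<rho> \<in> P12"
  shows "curv (ereal p) \<rho> = (1 - 1/p) * exp (L (1/p) (fst \<rho>))"
proof -
  have eq: "(\<lambda>t. A (ereal p) (t, 1-t)) = (\<lambda>s. (p * s powr (1/p), p * (1-s) powr (1/p)))"
    by (simp add: A_def Acomp_def)
  have dX: "((\<lambda>s. p * s powr (1/p)) has_real_derivative s powr (1/p-1)) (at s)" if "0<s" for s
    using DERIV_cmult[OF has_real_derivative_powr[OF that, of "1/p"], of p] p by simp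
  have dY: "((\<lambda>s. p * (1-s) powr (1/p)) has_real_derivative -((1-s) powr (1/p-1))) (at s)" if "s<1" for s
    using DERIV_cmult[OF dpow1[OF that, of "1/p"], of p] p by simp
  show ?thesis unfolding curv_def eq
    using r p by (intro curv_formula dX dY) (auto simp: P12_def)
qed

lemma curv_inf:
  assumes r: "\<rho> \<in> P12"
  shows "curv PInfty \<rho> = (1 - 0) * exp (L 0 (fst \<rho>))"
proof -
  have eq: "(\<lambda>t. A PInfty (t, 1-t)) = (\<lambda>s. (ln s, ln (1-s)))"
    by (simp add: A_def Acomp_def)
  have dX: "(ln has_real_derivative s powr (0-1)) (at s)" if "0<s" "s<1" for s
    using DERIV_ln_divide[OF that(1)] that by (simp add: powr_minus_divide)
  have dY: "((\<lambda>s. ln (1-s)) has_real_derivative -((1-s) powr (0-1))) (at s)" if "0<s" "s<1" for s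
  proof -
    have "((\<lambda>s. ln (1-s)) has_real_derivative 1/(1-s) * (-1)) (at s)"
      using that by (intro DERIV_chain2[OF DERIV_ln_divide]) (auto intro!: derivative_eq_intros)
    then show ?thesis using that by (simp add: powr_minus_divide)
  qed
  show ?thesis unfolding curv_def eq
    using r by (intro curv_formula dX dY) (auto simp: P12_def)
qed

theorem mainTheorem3:
  shows "(\<forall>p::real. 1 < p \<and> p < 2 \<longrightarrow> strictly_schur_decreasing_on P12 (curv (ereal p)))
       \<and> (\<forall>p::ereal. 2 < p \<longrightarrow> strictly_schur_increasing_on P12 (curv p))"
proof (intro conjI allI impI)
  fix p :: real assume p: "1 < p \<and> p < 2"
  show "strictly_schur_decreasing_on P12 (curv (ereal p))"
  proof (rule schur_dec[of _ "1/p"])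
    show "\<And>\<rho>. \<rho> \<in> P12 \<Longrightarrow> curv (ereal p) \<rho> = (1 - 1/p) * exp (L (1/p) (fst \<rho>))"
      using p curv_fin by auto
    show "1/2 < 1/p" "1/p < 1" using p by (auto simp: field_simps)
  qed
next
  fix p :: ereal assume p: "2 < p"
  show "strictly_schur_increasing_on P12 (curv p)"
  proof (cases p)
    case (real r)
    with p have r: "2 < r" by simp
    show ?thesis unfolding real
    proof (rule schur_inc[of _ "1/r"])
      show "\<And>\<rho>. \<rho> \<in> P12 \<Longrightarrow> curv (ereal r) \<rho> = (1 - 1/r) * exp (L (1/r) (fst \<rho>))"
        using r curv_fin by auto
      show "1/r < 1/2" using r by (auto simp: field_simps)
    qed
  next
    case PInf
    show ?thesis unfolding PInf
      by (rule schur_inc[of _ 0]) (use curv_inf in auto)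
  next
    case MInf
    with p show ?thesis by simp
  qed
qed

end
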